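(* Let $G$ be a connected graph with $|V(G)| \ge 3$. If $\det(G) \neq 1$, then $\det'(G) \le \det(G)$.
   Context: A vertex subset $S$ of $G$ is a vertex determining set if the only automorphism of $G$ fixing every vertex of $S$ is the identity; the determining number $\det(G)$ is the minimum size of a vertex determining set. For a graph $G$ with at most one isolated vertex and no component isomorphic to $K_2$, an edge subset $T$ is an edge determining set if the only automorphism $\phi$ of $G$ satisfying $\{\phi(u),\phi(v)\}=\{u,v\}$ for all $\{u,v\}\in T$ is the identity; the determining index $\det'(G)$ is the minimum size of an edge determining set. *)

theory Defs
  imports Main
begin

definition simple_graph :: "'a set \<Rightarrow> ('a \<Rightarrow> 'a \<Rightarrow> bool) \<Rightarrow> bool" where
  "simple_graph V E \<longleftrightarrow> finite V \<and> (\<forall>x y. E x y \<longrightarrow> x \<in> V \<and> y \<in> V)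
     \<and> (\<forall>x y. E x y \<longrightarrow> E y x) \<and> (\<forall>x. \<not> E x x)"

definition connected_graph :: "'a set \<Rightarrow> ('a \<Rightarrow> 'a \<Rightarrow> bool) \<Rightarrow> bool" where
  "connected_graph V E \<longleftrightarrow> (\<forall>u\<in>V. \<forall>v\<in>V. E\<^sup>*\<^sup>* u v)"

text \<open>Automorphisms (only their behaviour on V matters).\<close>
definition graph_aut :: "'a set \<Rightarrow> ('a \<Rightarrow> 'a \<Rightarrow> bool) \<Rightarrow> ('a \<Rightarrow> 'a) \<Rightarrow> bool" where
  "graph_aut V E f \<longleftrightarrow> bij_betw f V V \<and> (\<forall>x\<in>V. \<forall>y\<in>V. E (f x) (f y) \<longleftrightarrow> E x y)"

definition graph_edges :: "'a set \<Rightarrow> ('a \<Rightarrow> 'a \<Rightarrow> bool) \<Rightarrow> 'a set set" where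
  "graph_edges V E = {{u, v} | u v. E u v}"

definition vertex_determining :: "'a set \<Rightarrow> ('a \<Rightarrow> 'a \<Rightarrow> bool) \<Rightarrow> 'a set \<Rightarrow> bool" where
  "vertex_determining V E S \<longleftrightarrow> S \<subseteq> V \<and>
     (\<forall>f. graph_aut V E f \<and> (\<forall>x\<in>S. f x = x) \<longrightarrow> (\<forall>x\<in>V. f x = x))"

definition edge_determining :: "'a set \<Rightarrow> ('a \<Rightarrow> 'a \<Rightarrow> bool) \<Rightarrow> 'a set set \<Rightarrow> bool" where
  "edge_determining V E T \<longleftrightarrow> T \<subseteq> graph_edges V E \<and>
     (\<forall>f. graph_aut V E f \<and> (\<forall>u v. {u, v} \<in> T \<longrightarrow> {f u, f v} = {u, v})
        \<longrightarrow> (\<forall>x\<in>V. f x = x))"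

definition determining_number :: "'a set \<Rightarrow> ('a \<Rightarrow> 'a \<Rightarrow> bool) \<Rightarrow> nat" where
  "determining_number V E = (LEAST k. \<exists>S. vertex_determining V E S \<and> card S = k)"

definition determining_index :: "'a set \<Rightarrow> ('a \<Rightarrow> 'a \<Rightarrow> bool) \<Rightarrow> nat" where
  "determining_index V E = (LEAST k. \<exists>T. edge_determining V E T \<and> card T = k)"

end

theory Submission
  imports Defs
begin

definition gdist :: "('a \<Rightarrow> 'a \<Rightarrow> bool) \<Rightarrow> 'a \<Rightarrow> 'a \<Rightarrow> nat" where
  "gdist E u v = (LEAST n. (E ^^ n) u v)"

lemma gdist_walk: "(E ^^ n) u v \<Longrightarrow> (E ^^ gdist E u v) u v"
  unfolding gdist_def by (rule LeastI)

lemma gdist_le: "(E ^^ n) u v \<Longrightarrow> gdist E u v \<le> n"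
  unfolding gdist_def by (rule Least_le)

lemma conn_walk:
  assumes "connected_graph V E" "u \<in> V" "v \<in> V"
  shows "(E ^^ gdist E u v) u v"
proof -
  from assms have "E\<^sup>*\<^sup>* u v" unfolding connected_graph_def by blast
  then obtain n where "(E ^^ n) u v" using rtranclp_power by metis
  thus ?thesis by (rule gdist_walk)
qed

lemma walk_aut:
  assumes "simple_graph V E" "graph_aut V E f"
  shows "(E ^^ n) x y \<Longrightarrow> x \<in> V \<Longrightarrow> (E ^^ n) (f x) (f y) \<and> y \<in> V"
proof (induction n arbitrary: y)
  case 0
  then show ?case by auto
next
  case (Suc n)
  from Suc.prems(1) obtain z where z: "(E ^^ n) x z" "E z y" by (rule relpowp_Suc_E)
  with Suc.IH Suc.prems(2) have "(E ^^ n) (f x) (f z)" "z \<in> V" by auto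
  moreover have "y \<in> V" using z(2) assms(1) unfolding simple_graph_def by blast
  moreover have "E (f z) (f y)" using assms(2) z(2) \<open>z \<in> V\<close> \<open>y \<in> V\<close>
    unfolding graph_aut_def by blast
  ultimately show ?case by (meson relpowp_Suc_I)
qed

lemma aut_inv:
  assumes "graph_aut V E f"
  shows "graph_aut V E (inv_into V f)"
proof -
  have b: "bij_betw f V V" using assms unfolding graph_aut_def by blast
  have "bij_betw (inv_into V f) V V" using b by (rule bij_betw_inv_into)
  moreover have "\<forall>x\<in>V. \<forall>y\<in>V. E (inv_into V f x) (inv_into V f y) \<longleftrightarrow> E x y"
  proof (intro ballI)
    fix x y assume xy: "x \<in> V" "y \<in> V"
    have ix: "inv_into V f x \<in> V" "inv_into V f y \<in> V"
      using xy b by (metis bij_betw_def inv_into_into)+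
    have "f (inv_into V f x) = x" "f (inv_into V f y) = y"
      using xy b by (metis bij_betw_def f_inv_into_f)+
    thus "E (inv_into V f x) (inv_into V f y) \<longleftrightarrow> E x y"
      using assms ix unfolding graph_aut_def by metis
  qed
  ultimately show ?thesis unfolding graph_aut_def by blast
qed

lemma dist_aut_le:
  assumes "simple_graph V E" "connected_graph V E" "graph_aut V E f" "u \<in> V" "v \<in> V"
  shows "gdist E (f u) (f v) \<le> gdist E u v"
  using gdist_le[OF conjunct1[OF walk_aut[OF assms(1,3) conn_walk[OF assms(2,4,5)] assms(4)]]] .

lemma dist_aut:
  assumes "simple_graph V E" "connected_graph V E" "graph_aut V E f" "u \<in> V" "v \<in> V"
  shows "gdist E (f u) (f v) = gdist E u v"
proof -
  have b: "bij_betw f V V" using assms unfolding graph_aut_def by blast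
  let ?g = "inv_into V f"
  have fu: "f u \<in> V" "f v \<in> V" using b assms(4,5) by (metis bij_betwE)+
  have "gdist E (?g (f u)) (?g (f v)) \<le> gdist E (f u) (f v)"
    using dist_aut_le[OF assms(1,2) aut_inv[OF assms(3)] fu] .
  moreover have "?g (f u) = u" "?g (f v) = v" using b assms(4,5)
    by (metis bij_betw_def inv_into_f_f)+
  ultimately show ?thesis using dist_aut_le[OF assms] by simp
qed

lemma parent:
  assumes "simple_graph V E" "connected_graph V E" "u \<in> V" "v \<in> V" "u \<noteq> v"
  shows "\<exists>q. E v q \<and> gdist E u q < gdist E u v"
proof -
  have w: "(E ^^ gdist E u v) u v" using conn_walk[OF assms(2,3,4)] .
  have "gdist E u v \<noteq> 0" using w assms(5) by (metis relpowp_0_E)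
  then obtain m where m: "gdist E u v = Suc m" using not0_implies_Suc by blast
  with w obtain q where "(E ^^ m) u q" "E q v" by (metis relpowp_Suc_E)
  moreover have "E v q" using \<open>E q v\<close> assms(1) unfolding simple_graph_def by blast
  ultimately show ?thesis using gdist_le m by fastforce
qed

lemma walk_exit:
  "(E ^^ n) a b \<Longrightarrow> a \<in> A \<Longrightarrow> b \<notin> A \<Longrightarrow> \<exists>y z. y \<in> A \<and> z \<notin> A \<and> E y z"
proof (induction n arbitrary: b)
  case 0
  then show ?case by auto
next
  case (Suc n)
  from Suc.prems(1) obtain c where c: "(E ^^ n) a c" "E c b" by (rule relpowp_Suc_E)
  show ?case
  proof (cases "c \<in> A")
    case True
    show ?thesis using True c(2) Suc.prems(3) by blast
  next
    case False
    show ?thesis by (rule Suc.IH[OF c(1) Suc.prems(2) False])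
  qed
qed

theorem theorem4:
  fixes V :: "'a set" and E :: "'a \<Rightarrow> 'a \<Rightarrow> bool"
  assumes "simple_graph V E"
    and "connected_graph V E"
    and "card V \<ge> 3"
    and "determining_number V E \<noteq> 1"
  shows "determining_index V E \<le> determining_number V E"
proof -
  note sg = assms(1) and cg = assms(2)
  have finV: "finite V" using sg unfolding simple_graph_def by blast
  have symE: "\<And>x y. E x y \<Longrightarrow> E y x" and inV: "\<And>x y. E x y \<Longrightarrow> x \<in> V \<and> y \<in> V"
    and irr: "\<And>x. \<not> E x x"
    using sg unfolding simple_graph_def by blast+
  have "vertex_determining V E V" unfolding vertex_determining_def by blast
  hence "\<exists>S. vertex_determining V E S \<and> card S = card V" by blast
  hence "\<exists>S. vertex_determining V E S \<and> card S = determining_number V E"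
    unfolding determining_number_def
    by (rule LeastI[where P="\<lambda>k. \<exists>S. vertex_determining V E S \<and> card S = k"])
  then obtain S where S: "vertex_determining V E S" and cS: "card S = determining_number V E"
    by blast
  have SV: "S \<subseteq> V" using S unfolding vertex_determining_def by blast
  have finS: "finite S" using SV finV finite_subset by blast
  have Sdet: "\<And>f. graph_aut V E f \<Longrightarrow> (\<forall>x\<in>S. f x = x) \<Longrightarrow> \<forall>x\<in>V. f x = x"
    using S unfolding vertex_determining_def by blast
  have idx: "determining_index V E \<le> card T" if "edge_determining V E T" for T
    unfolding determining_index_def using that by (metis (mono_tags) Least_le)
  have Tuse: "f u \<in> {u, w}" if "edge_determining V E T" "graph_aut V E f"
      "\<forall>u v. {u, v} \<in> T \<longrightarrow> {f u, f v} = {u, v}" "{u, w} \<in> T" for T f u w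
    using that(3,4) by blast
  show ?thesis
  proof (cases "S = {}")
    case True
    have "edge_determining V E {}"
      unfolding edge_determining_def using Sdet True by auto
    then show ?thesis using idx by fastforce
  next
    case False
    then obtain v1 where v1: "v1 \<in> S" by blast
    have "card S \<noteq> 0" using False finS by simp
    hence "card S \<ge> 2" using assms(4) cS by linarith
    then obtain v2 where v2: "v2 \<in> S" "v2 \<noteq> v1"
    proof -
      have "card (S - {v1}) \<noteq> 0" using \<open>card S \<ge> 2\<close> v1 finS by simp
      hence "S - {v1} \<noteq> {}" by (metis card.empty)
      thus ?thesis using that by blast
    qed
    have v1V: "v1 \<in> V" and v2V: "v2 \<in> V" using v1 v2 SV by auto
    define R where "R = S - {v1, v2}"
    have cR: "card R + 2 = card S" unfolding R_def using v1 v2 finS \<open>card S \<ge> 2\<close>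
      by (simp add: card_Diff_subset)
    have "\<forall>v\<in>R. \<exists>q. E v q \<and> gdist E v1 q < gdist E v1 v"
      using parent[OF sg cg v1V] SV unfolding R_def by blast
    then obtain q where q: "\<And>v. v \<in> R \<Longrightarrow> E v (q v) \<and> gdist E v1 (q v) < gdist E v1 v"
      by metis
    define TR where "TR = (\<lambda>v. {v, q v}) ` R"
    have cTR: "card TR \<le> card R" unfolding TR_def by (rule card_image_le) (use finS R_def in auto)
    have finTR: "finite TR" unfolding TR_def R_def using finS by auto
    have gadget: "\<exists>e1 e2. e1 \<in> graph_edges V E \<and> e2 \<in> graph_edges V E \<and>
       (\<forall>f. graph_aut V E f \<and> (\<forall>u v. {u, v} \<in> {e1, e2} \<union> TR \<longrightarrow> {f u, f v} = {u, v})
            \<longrightarrow> f v1 = v1 \<and> f v2 = v2)"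
    proof -
      have finj: "f x = f y \<Longrightarrow> x = y" if "graph_aut V E f" "x \<in> V" "y \<in> V" for f x y
        using that unfolding graph_aut_def bij_betw_def inj_on_def by blast
      show ?thesis
      proof (cases "E v1 v2")
        case True
        have "card {v1, v2} < card V" using assms(3) by (simp add: card_insert_if)
        then obtain x0 where x0: "x0 \<in> V" "x0 \<notin> {v1, v2}"
        proof -
          have "\<not> V \<subseteq> {v1, v2}" using \<open>card {v1, v2} < card V\<close> card_mono[of "{v1,v2}" V] by auto
          thus ?thesis using that by blast
        qed
        have "(E ^^ gdist E v1 x0) v1 x0" using conn_walk[OF cg v1V x0(1)] .
        then obtain y z where yz: "y \<in> {v1, v2}" "z \<notin> {v1, v2}" "E y z"
          using walk_exit[where E=E and a=v1 and b=x0 and A="{v1, v2}"] x0 by blast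
        show ?thesis
        proof (rule exI, rule exI, intro conjI; (intro allI impI)?)
          show "{v1, v2} \<in> graph_edges V E" using True unfolding graph_edges_def by blast
          show "{y, z} \<in> graph_edges V E" using yz unfolding graph_edges_def by blast
          fix f assume fa: "graph_aut V E f \<and> (\<forall>u v. {u, v} \<in> {{v1, v2}, {y, z}} \<union> TR \<longrightarrow> {f u, f v} = {u, v})"
          have a: "{f v1, f v2} = {v1, v2}" "{f y, f z} = {y, z}"
            using conjunct2[OF fa, rule_format, of v1 v2] conjunct2[OF fa, rule_format, of y z] by simp_all
          have ne: "f v1 \<noteq> f v2" using finj[OF conjunct1[OF fa] v1V v2V] v2(2) by blast
          have "f y \<in> {f v1, f v2}" using yz(1) by blast
          hence "f y \<in> {v1, v2}" using a(1) by simp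
          moreover have "f y \<in> {y, z}" using a(2) by blast
          ultimately have fy: "f y = y" using yz(2) by blast
          have o: "f v1 = v1 \<or> f v1 = v2" "f v2 = v1 \<or> f v2 = v2" using a(1) by blast+
          show "f v1 = v1 \<and> f v2 = v2"
          proof (cases "y = v1")
            case True
            hence f1: "f v1 = v1" using fy by simp
            hence "f v2 \<noteq> v1" using ne by simp
            thus ?thesis using f1 o(2) by blast
          next
            case False
            then have "y = v2" using yz(1) by blast
            hence f2: "f v2 = v2" using fy by simp
            hence "f v1 \<noteq> v2" using ne by simp
            thus ?thesis using f2 o(1) by blast
          qed
        qed
      next
        case False
        define k where "k = gdist E v1 v2"
        have w: "(E ^^ k) v1 v2" unfolding k_def using conn_walk[OF cg v1V v2V] .
        have "k \<noteq> 0" using w v2(2) by (metis relpowp_0_E)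
        moreover have "k \<noteq> 1" using w False by auto
        ultimately obtain j where kj: "k = Suc (Suc j)" by (metis One_nat_def not0_implies_Suc)
        from w kj obtain a1 where a1: "E v1 a1" "(E ^^ Suc j) a1 v2" by (metis relpowp_Suc_E2)
        from a1(2) obtain p2 where p2: "(E ^^ j) a1 p2" "E p2 v2" by (rule relpowp_Suc_E)
        have d1: "gdist E a1 v2 < k" using gdist_le[OF a1(2)] kj by simp
        have d2: "gdist E a1 p2 < k" using gdist_le[OF p2(1)] kj by simp
        have d3: "gdist E v1 p2 < k" using gdist_le[OF relpowp_Suc_I2[OF a1(1) p2(1)]] kj by simp
        have a1V: "a1 \<in> V" and p2V: "p2 \<in> V" using inV a1(1) p2(2) by blast+
        show ?thesis
        proof (rule exI, rule exI, intro conjI; (intro allI impI)?)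
          show "{v1, a1} \<in> graph_edges V E" using a1 unfolding graph_edges_def by blast
          show "{v2, p2} \<in> graph_edges V E" using symE[OF p2(2)] unfolding graph_edges_def by blast
          fix f assume fa: "graph_aut V E f \<and> (\<forall>u v. {u, v} \<in> {{v1, a1}, {v2, p2}} \<union> TR \<longrightarrow> {f u, f v} = {u, v})"
          have a: "{f v1, f a1} = {v1, a1}" "{f v2, f p2} = {v2, p2}"
            using conjunct2[OF fa, rule_format, of v1 a1] conjunct2[OF fa, rule_format, of v2 p2] by simp_all
          have dd: "gdist E (f v1) (f v2) = k" unfolding k_def using dist_aut[OF sg cg conjunct1[OF fa] v1V v2V] .
          have "f v1 \<noteq> a1"
          proof
            assume "f v1 = a1"
            moreover have "f v2 = v2 \<or> f v2 = p2" using a(2) by blast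
            ultimately show False using dd d1 d2 by auto
          qed
          hence f1: "f v1 = v1" using a(1) by blast
          have "f v2 \<noteq> p2"
          proof
            assume "f v2 = p2"
            thus False using dd d3 f1 by auto
          qed
          thus "f v1 = v1 \<and> f v2 = v2" using f1 a(2) by blast
        qed
      qed
    qed
    then obtain e1 e2 where e: "e1 \<in> graph_edges V E" "e2 \<in> graph_edges V E"
      "\<forall>f. graph_aut V E f \<and> (\<forall>u v. {u, v} \<in> {e1, e2} \<union> TR \<longrightarrow> {f u, f v} = {u, v})
            \<longrightarrow> f v1 = v1 \<and> f v2 = v2" by (elim exE conjE) (rule that)
    let ?T = "{e1, e2} \<union> TR"
    have "edge_determining V E ?T"
      unfolding edge_determining_def
    proof (intro conjI allI impI)
      show "?T \<subseteq> graph_edges V E" using e(1,2) q unfolding TR_def graph_edges_def by blast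
    next
      fix f assume fa: "graph_aut V E f \<and> (\<forall>u v. {u, v} \<in> ?T \<longrightarrow> {f u, f v} = {u, v})"
      have f12: "f v1 = v1" "f v2 = v2" using e(3)[rule_format, OF fa] by blast+
      have "\<forall>x\<in>S. f x = x"
      proof
        fix x assume xS: "x \<in> S"
        show "f x = x"
        proof (cases "x \<in> R")
          case True
          have "{x, q x} \<in> ?T" unfolding TR_def using True by blast
          hence "{f x, f (q x)} = {x, q x}" using conjunct2[OF fa] by blast
          hence "f x \<in> {x, q x}" by blast
          moreover have "f x \<noteq> q x"
          proof
            assume "f x = q x"
            have "gdist E (f v1) (f x) = gdist E v1 x"
              using dist_aut[OF sg cg conjunct1[OF fa] v1V] xS SV by blast
            then show False using q[OF True] f12 \<open>f x = q x\<close> by simp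
          qed
          ultimately show ?thesis by blast
        next
          case False
          then show ?thesis using xS f12 unfolding R_def by blast
        qed
      qed
      thus "\<forall>x\<in>V. f x = x" by (rule Sdet[OF conjunct1[OF fa]])
    qed
    moreover have "card ?T \<le> card S"
    proof -
      have "card ?T \<le> card {e1, e2} + card TR" by (rule card_Un_le)
      also have "card {e1, e2} \<le> 2" by (simp add: card_insert_le_m1)
      then show ?thesis using cTR cR card_Un_le[of "{e1,e2}" TR] by linarith
    qed
    ultimately show ?thesis using idx cS by fastforce
  qed
qed

end
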